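(* Let $B=A_P[y_1,y_2;\sigma,\delta,\tau]$ be a right double extension of a $K$-algebra $A$, let $k,l\in K$ and $0\neq z=ky_1+ly_2\in B$. Then $zA\subseteq Az+A$ if and only if $kl\sigma_{11}+l^2\sigma_{21}=kl\sigma_{22}+k^2\sigma_{12}$.
   Context: $K$ is a field. Let $A$ be a subalgebra of a $K$-algebra $B$. $B$ is a right double extension of $A$ if: (i) $B$ is generated by $A$ and $y_1,y_2$; (ii) $y_2y_1=p_{12}y_1y_2+p_{11}y_1^2+\tau_1y_1+\tau_2y_2+\tau_0$ for some $p_{12},p_{11}\in K$, $\tau_0,\tau_1,\tau_2\in A$; (iii) $B$ is a free left $A$-module with basis $\{y_1^iy_2^j:i,j\ge0\}$; (iv) $y_1A+y_2A+A\subseteq Ay_1+Ay_2+A$, i.e. there are ($K$-linear) maps $\sigma_{ij},\delta_i\colon A\to A$ ($i,j=1,2$) with $y_1a=\sigma_{11}(a)y_1+\sigma_{12}(a)y_2+\delta_1(a)$ and $y_2a=\sigma_{21}(a)y_1+\sigma_{22}(a)y_2+\delta_2(a)$ for all $a\in A$. One writes $B=A_P[y_1,y_2;\sigma,\delta,\tau]$ with $\sigma=(\sigma_{ij})$, $\delta=(\delta_1,\delta_2)^T$, $P=\{p_{12},p_{11}\}$, $\tau=\{\tau_0,\tau_1,\tau_2\}$. *)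

theory Defs
  imports Main
begin

text \<open>A K-algebra structure on a ring type 'b is given by a ring homomorphism
  emb :: 'k => 'b from the field K into the centre of B; the scalar
  multiplication c . x is emb c * x.  B itself is the whole type 'b.\<close>

definition K_algebra_emb :: "('k::field \<Rightarrow> 'b::ring_1) \<Rightarrow> bool" where
  "K_algebra_emb emb \<longleftrightarrow>
     emb 1 = 1 \<and> (\<forall>c d. emb (c + d) = emb c + emb d) \<and> (\<forall>c d. emb (c * d) = emb c * emb d)
     \<and> (\<forall>c x. emb c * x = x * emb c)"

definition subalgebra :: "('k::field \<Rightarrow> 'b::ring_1) \<Rightarrow> 'b set \<Rightarrow> bool" where
  "subalgebra emb A \<longleftrightarrow>
     0 \<in> A \<and> 1 \<in> A \<and> (\<forall>a\<in>A. \<forall>b\<in>A. a + b \<in> A \<and> a - b \<in> A \<and> a * b \<in> A)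
     \<and> (\<forall>c. \<forall>a\<in>A. emb c * a \<in> A)"

definition K_linear_on :: "('k::field \<Rightarrow> 'b::ring_1) \<Rightarrow> 'b set \<Rightarrow> ('b \<Rightarrow> 'b) \<Rightarrow> bool" where
  "K_linear_on emb A f \<longleftrightarrow>
     (\<forall>a\<in>A. f a \<in> A) \<and> (\<forall>a\<in>A. \<forall>b\<in>A. f (a + b) = f a + f b)
     \<and> (\<forall>c. \<forall>a\<in>A. f (emb c * a) = emb c * f a)"

inductive_set generated :: "('k::field \<Rightarrow> 'b::ring_1) \<Rightarrow> 'b set \<Rightarrow> 'b \<Rightarrow> 'b \<Rightarrow> 'b set"
  for emb A y1 y2 where
  gen_base: "a \<in> A \<Longrightarrow> a \<in> generated emb A y1 y2"
| gen_y1: "y1 \<in> generated emb A y1 y2"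
| gen_y2: "y2 \<in> generated emb A y1 y2"
| gen_one: "1 \<in> generated emb A y1 y2"
| gen_add: "x \<in> generated emb A y1 y2 \<Longrightarrow> y \<in> generated emb A y1 y2 \<Longrightarrow> x + y \<in> generated emb A y1 y2"
| gen_mult: "x \<in> generated emb A y1 y2 \<Longrightarrow> y \<in> generated emb A y1 y2 \<Longrightarrow> x * y \<in> generated emb A y1 y2"
| gen_smult: "x \<in> generated emb A y1 y2 \<Longrightarrow> emb c * x \<in> generated emb A y1 y2"

definition free_left_module_basis :: "'b::ring_1 set \<Rightarrow> 'b \<Rightarrow> 'b \<Rightarrow> bool" where
  "free_left_module_basis A y1 y2 \<longleftrightarrow>
     (\<forall>b. \<exists>S c. finite S \<and> (\<forall>p\<in>S. c p \<in> A) \<and>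
         b = (\<Sum>(i,j)\<in>S. c (i,j) * y1 ^ i * y2 ^ j))
   \<and> (\<forall>S c. finite S \<and> (\<forall>p\<in>S. c p \<in> A) \<and>
         (\<Sum>(i,j)\<in>S. c (i,j) * y1 ^ i * y2 ^ j) = 0 \<longrightarrow> (\<forall>p\<in>S. c p = 0))"

definition right_double_extension ::
  "('k::field \<Rightarrow> 'b::ring_1) \<Rightarrow> 'b set \<Rightarrow> 'b \<Rightarrow> 'b \<Rightarrow> 'k \<Rightarrow> 'k \<Rightarrow> 'b \<Rightarrow> 'b \<Rightarrow> 'b \<Rightarrow>
   ('b \<Rightarrow> 'b) \<Rightarrow> ('b \<Rightarrow> 'b) \<Rightarrow> ('b \<Rightarrow> 'b) \<Rightarrow> ('b \<Rightarrow> 'b) \<Rightarrow> ('b \<Rightarrow> 'b) \<Rightarrow> ('b \<Rightarrow> 'b) \<Rightarrow> bool" where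
  "right_double_extension emb A y1 y2 p12 p11 \<tau>0 \<tau>1 \<tau>2 \<sigma>11 \<sigma>12 \<sigma>21 \<sigma>22 \<delta>1 \<delta>2 \<longleftrightarrow>
     K_algebra_emb emb \<and> subalgebra emb A
   \<and> generated emb A y1 y2 = UNIV
   \<and> \<tau>0 \<in> A \<and> \<tau>1 \<in> A \<and> \<tau>2 \<in> A
   \<and> y2 * y1 = emb p12 * y1 * y2 + emb p11 * y1 ^ 2 + \<tau>1 * y1 + \<tau>2 * y2 + \<tau>0
   \<and> free_left_module_basis A y1 y2
   \<and> K_linear_on emb A \<sigma>11 \<and> K_linear_on emb A \<sigma>12 \<and> K_linear_on emb A \<sigma>21
   \<and> K_linear_on emb A \<sigma>22 \<and> K_linear_on emb A \<delta>1 \<and> K_linear_on emb A \<delta>2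
   \<and> (\<forall>a\<in>A. y1 * a = \<sigma>11 a * y1 + \<sigma>12 a * y2 + \<delta>1 a)
   \<and> (\<forall>a\<in>A. y2 * a = \<sigma>21 a * y1 + \<sigma>22 a * y2 + \<delta>2 a)"

end

theory Submission
  imports Defs
begin

lemma emb_basics:
  assumes "K_algebra_emb (emb :: 'k::field \<Rightarrow> 'b::ring_1)"
  shows "emb 0 = 0" "\<And>c d. emb (c * d) = emb c * emb d" "\<And>c x. emb c * x = x * emb c"
    "emb 1 = 1" "\<And>c d. emb (c+d) = emb c + emb d"
proof -
  have "emb (0+0) = emb 0 + emb 0" using assms unfolding K_algebra_emb_def by blast
  thus "emb 0 = 0" by simp
qed (use assms in \<open>unfold K_algebra_emb_def, blast+\<close>)

lemma cancel_emb:
  assumes "K_algebra_emb (emb :: 'k::field \<Rightarrow> 'b::ring_1)" "k \<noteq> 0"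
    and "emb k * x = emb k * y"
  shows "x = y"
proof -
  have "emb (inverse k) * (emb k * x) = emb (inverse k) * (emb k * y)" using assms(3) by simp
  hence "emb (inverse k * k) * x = emb (inverse k * k) * y"
    using emb_basics(2)[OF assms(1)] by (simp add: mult.assoc)
  thus ?thesis using assms(2) emb_basics(4)[OF assms(1)] by simp
qed

theorem lemma2p3:
  fixes emb :: "'k::field \<Rightarrow> 'b::ring_1"
    and A :: "'b set" and y1 y2 \<tau>0 \<tau>1 \<tau>2 :: 'b and p12 p11 k l :: 'k
    and \<sigma>11 \<sigma>12 \<sigma>21 \<sigma>22 \<delta>1 \<delta>2 :: "'b \<Rightarrow> 'b"
  assumes "right_double_extension emb A y1 y2 p12 p11 \<tau>0 \<tau>1 \<tau>2 \<sigma>11 \<sigma>12 \<sigma>21 \<sigma>22 \<delta>1 \<delta>2"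
    and "z = emb k * y1 + emb l * y2"
    and "z \<noteq> 0"
  shows "(\<forall>a\<in>A. \<exists>a'\<in>A. \<exists>a''\<in>A. z * a = a' * z + a'') \<longleftrightarrow>
         (\<forall>a\<in>A. emb (k * l) * \<sigma>11 a + emb (l ^ 2) * \<sigma>21 a
                = emb (k * l) * \<sigma>22 a + emb (k ^ 2) * \<sigma>12 a)"
proof -
  note D = assms(1)[unfolded right_double_extension_def]
  have E: "K_algebra_emb emb" using D by blast
  note eb = emb_basics[OF E]
  have sub: "subalgebra emb A" using D by blast
  have Aadd: "\<And>a b. a \<in> A \<Longrightarrow> b \<in> A \<Longrightarrow> a + b \<in> A" and Asub: "\<And>a b. a \<in> A \<Longrightarrow> b \<in> A \<Longrightarrow> a - b \<in> A"
    and Asm: "\<And>c a. a \<in> A \<Longrightarrow> emb c * a \<in> A"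
    using sub unfolding subalgebra_def by auto
  have lin: "K_linear_on emb A \<sigma>11" "K_linear_on emb A \<sigma>12" "K_linear_on emb A \<sigma>21"
    "K_linear_on emb A \<sigma>22" "K_linear_on emb A \<delta>1" "K_linear_on emb A \<delta>2" using D by blast+
  have inA: "\<And>a. a \<in> A \<Longrightarrow> \<sigma>11 a \<in> A \<and> \<sigma>12 a \<in> A \<and> \<sigma>21 a \<in> A \<and> \<sigma>22 a \<in> A \<and> \<delta>1 a \<in> A \<and> \<delta>2 a \<in> A"
  proof -
    fix a assume "a \<in> A"
    moreover have "\<forall>a\<in>A. \<sigma>11 a \<in> A" "\<forall>a\<in>A. \<sigma>12 a \<in> A" "\<forall>a\<in>A. \<sigma>21 a \<in> A"
      "\<forall>a\<in>A. \<sigma>22 a \<in> A" "\<forall>a\<in>A. \<delta>1 a \<in> A" "\<forall>a\<in>A. \<delta>2 a \<in> A"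
      using lin[unfolded K_linear_on_def, THEN conjunct1] by auto
    ultimately show "\<sigma>11 a \<in> A \<and> \<sigma>12 a \<in> A \<and> \<sigma>21 a \<in> A \<and> \<sigma>22 a \<in> A \<and> \<delta>1 a \<in> A \<and> \<delta>2 a \<in> A"
      by blast
  qed
  have free: "free_left_module_basis A y1 y2" using D by blast
  have za: "z * a = (emb k * \<sigma>11 a + emb l * \<sigma>21 a) * y1 + (emb k * \<sigma>12 a + emb l * \<sigma>22 a) * y2
          + (emb k * \<delta>1 a + emb l * \<delta>2 a)" if "a \<in> A" for a
  proof -
    have "y1 * a = \<sigma>11 a * y1 + \<sigma>12 a * y2 + \<delta>1 a" "y2 * a = \<sigma>21 a * y1 + \<sigma>22 a * y2 + \<delta>2 a"
      using D that by blast+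
    thus ?thesis using assms(2) by (simp add: algebra_simps)
  qed
  have az: "a' * z = (emb k * a') * y1 + (emb l * a') * y2" for a'
  proof -
    have "a' * emb k = emb k * a'" "a' * emb l = emb l * a'" using eb(3) by metis+
    thus ?thesis using assms(2) by (simp add: distrib_left mult.assoc[symmetric])
  qed
  have comm: "emb l * emb k = emb k * emb l" using eb(3) by blast
  have Ekl: "emb (k*l) = emb k * emb l" "emb (l^2) = emb l * emb l" "emb (k^2) = emb k * emb k"
    using eb(2) by (simp_all add: power2_eq_square)
  show ?thesis
  proof
    assume H: "\<forall>a\<in>A. \<exists>a'\<in>A. \<exists>a''\<in>A. z * a = a' * z + a''"
    show "\<forall>a\<in>A. emb (k * l) * \<sigma>11 a + emb (l ^ 2) * \<sigma>21 a
                = emb (k * l) * \<sigma>22 a + emb (k ^ 2) * \<sigma>12 a"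
    proof
      fix a assume a: "a \<in> A"
      then obtain a' a'' where a': "a' \<in> A" "a'' \<in> A" and eq: "z * a = a' * z + a''" using H by blast
      define c1 where "c1 = emb k * \<sigma>11 a + emb l * \<sigma>21 a - emb k * a'"
      define c2 where "c2 = emb k * \<sigma>12 a + emb l * \<sigma>22 a - emb l * a'"
      define c0 where "c0 = emb k * \<delta>1 a + emb l * \<delta>2 a - a''"
      note ia = inA[OF a]
      have c1A: "c1 \<in> A" unfolding c1_def by (intro Asub Aadd Asm; use ia a' in blast)
      have c2A: "c2 \<in> A" unfolding c2_def by (intro Asub Aadd Asm; use ia a' in blast)
      have c0A: "c0 \<in> A" unfolding c0_def by (intro Asub Aadd Asm; use ia a' in blast)
      have sum0: "c1 * y1 + c2 * y2 + c0 = 0"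
      proof -
        have "c1 * y1 + c2 * y2 + c0 = ((emb k * \<sigma>11 a + emb l * \<sigma>21 a) * y1 + (emb k * \<sigma>12 a + emb l * \<sigma>22 a) * y2
          + (emb k * \<delta>1 a + emb l * \<delta>2 a)) - ((emb k * a') * y1 + (emb l * a') * y2 + a'')"
          unfolding c1_def c2_def c0_def by (simp add: left_diff_distrib)
        also have "\<dots> = z * a - (a' * z + a'')" using za[OF a] az[of a'] by simp
        also have "\<dots> = 0" using eq by simp
        finally show ?thesis .
      qed
      define c where "c = (\<lambda>p::nat\<times>nat. if p = (1,0) then c1 else if p = (0,1) then c2 else c0)"
      let ?S = "{(1::nat,0::nat),(0,1),(0,0)}"
      have "(\<Sum>(i,j)\<in>?S. c (i,j) * y1 ^ i * y2 ^ j) = c1 * y1 + c2 * y2 + c0"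
        unfolding c_def by (simp add: algebra_simps)
      hence "(\<Sum>(i,j)\<in>?S. c (i,j) * y1 ^ i * y2 ^ j) = 0" using sum0 by simp
      moreover have "\<forall>p\<in>?S. c p \<in> A" unfolding c_def using c1A c2A c0A by auto
      moreover have "finite ?S" by simp
      ultimately have "\<forall>p\<in>?S. c p = 0"
        using free[unfolded free_left_module_basis_def, THEN conjunct2, rule_format, of ?S c] by blast
      hence "c1 = 0" "c2 = 0" unfolding c_def by auto
      hence h1: "emb k * \<sigma>11 a + emb l * \<sigma>21 a = emb k * a'"
        and h2: "emb k * \<sigma>12 a + emb l * \<sigma>22 a = emb l * a'" unfolding c1_def c2_def by simp_all
      have "emb l * (emb k * a') = emb k * (emb l * a')" by (simp add: mult.assoc[symmetric] comm)
      hence "emb l * (emb k * \<sigma>11 a + emb l * \<sigma>21 a) = emb k * (emb k * \<sigma>12 a + emb l * \<sigma>22 a)"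
        using h1 h2 by simp
      thus "emb (k * l) * \<sigma>11 a + emb (l ^ 2) * \<sigma>21 a
                = emb (k * l) * \<sigma>22 a + emb (k ^ 2) * \<sigma>12 a"
        unfolding Ekl by (simp add: distrib_left mult.assoc[symmetric] comm add.commute)
    qed
  next
    assume C: "\<forall>a\<in>A. emb (k * l) * \<sigma>11 a + emb (l ^ 2) * \<sigma>21 a
                = emb (k * l) * \<sigma>22 a + emb (k ^ 2) * \<sigma>12 a"
    have kl: "k \<noteq> 0 \<or> l \<noteq> 0" using assms(2,3) eb(1) by auto
    show "\<forall>a\<in>A. \<exists>a'\<in>A. \<exists>a''\<in>A. z * a = a' * z + a''"
    proof
      fix a assume a: "a \<in> A"
      have Ca: "emb l * (emb k * \<sigma>11 a + emb l * \<sigma>21 a) = emb k * (emb k * \<sigma>12 a + emb l * \<sigma>22 a)"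
        using C[rule_format, OF a] unfolding Ekl
        by (simp add: distrib_left mult.assoc[symmetric] comm add.commute)
      obtain a' where a'A: "a' \<in> A" and h1: "emb k * a' = emb k * \<sigma>11 a + emb l * \<sigma>21 a"
        and h2: "emb l * a' = emb k * \<sigma>12 a + emb l * \<sigma>22 a"
      proof (cases "k \<noteq> 0")
        case True
        define a' where "a' = \<sigma>11 a + emb (l/k) * \<sigma>21 a"
        have A1: "a' \<in> A" unfolding a'_def by (intro Aadd Asm; use inA[OF a] in blast)
        have H1: "emb k * a' = emb k * \<sigma>11 a + emb l * \<sigma>21 a"
          unfolding a'_def using True by (simp add: distrib_left mult.assoc[symmetric] eb(2)[symmetric])
        have "emb k * (emb l * a') = emb k * (emb k * \<sigma>12 a + emb l * \<sigma>22 a)"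
        proof -
          have "emb k * (emb l * a') = emb l * (emb k * a')" by (simp add: mult.assoc[symmetric] comm)
          also have "\<dots> = emb l * (emb k * \<sigma>11 a + emb l * \<sigma>21 a)" using H1 by simp
          finally show ?thesis using Ca by simp
        qed
        hence H2: "emb l * a' = emb k * \<sigma>12 a + emb l * \<sigma>22 a" using cancel_emb[OF E True] by blast
        show ?thesis using that A1 H1 H2 by blast
      next
        case False
        hence L: "l \<noteq> 0" using kl by simp
        define a' where "a' = \<sigma>22 a + emb (k/l) * \<sigma>12 a"
        have A1: "a' \<in> A" unfolding a'_def by (intro Aadd Asm; use inA[OF a] in blast)
        have H2: "emb l * a' = emb k * \<sigma>12 a + emb l * \<sigma>22 a"
          unfolding a'_def using L by (simp add: distrib_left mult.assoc[symmetric] eb(2)[symmetric])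
        have "emb l * (emb k * a') = emb l * (emb k * \<sigma>11 a + emb l * \<sigma>21 a)"
        proof -
          have "emb l * (emb k * a') = emb k * (emb l * a')" by (simp add: mult.assoc[symmetric] comm)
          also have "\<dots> = emb k * (emb k * \<sigma>12 a + emb l * \<sigma>22 a)" using H2 by simp
          finally show ?thesis using Ca by simp
        qed
        hence H1: "emb k * a' = emb k * \<sigma>11 a + emb l * \<sigma>21 a" using cancel_emb[OF E L] by blast
        show ?thesis using that A1 H1 H2 by blast
      qed
      have "emb k * \<delta>1 a + emb l * \<delta>2 a \<in> A" by (intro Aadd Asm; use inA[OF a] in blast)
      moreover have "z * a = a' * z + (emb k * \<delta>1 a + emb l * \<delta>2 a)"
        using za[OF a] az[of a'] h1 h2 by (simp add: algebra_simps)
      ultimately show "\<exists>a'\<in>A. \<exists>a''\<in>A. z * a = a' * z + a''" using a'A by blast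
    qed
  qed
qed

end
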